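(* Let $m\in\mathbb N$ and let $\xi_1,\dots,\xi_m$ be real random variables with partial sums $S_0=0$, $S_k=\xi_1+\dots+\xi_k$ ($1\le k\le m$). Assume (i) $S_m=0$ a.s.; (ii) for every cyclic permutation $\pi$ of $\{1,\dots,m\}$, $(\xi_1,\dots,\xi_m)$ and $(\xi_{\pi(1)},\dots,\xi_{\pi(m)})$ have the same distribution; (iii) for every $1\le k\le m-1$ the distribution of $S_k$ has no atoms. Then $$\mathbb P(S_1>0,\dots,S_{m-1}>0)=\frac1m.$$
   Context: A cyclic permutation of $\{1,\dots,m\}$ is a permutation whose cycle decomposition consists of exactly one cycle. *)

theory Defs
  imports "HOL-Probability.Probability"
begin

definition cyclic_perm :: "nat \<Rightarrow> (nat \<Rightarrow> nat) \<Rightarrow> bool" where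
  "cyclic_perm m \<pi> \<longleftrightarrow> \<pi> permutes {1..m} \<and>
     (\<forall>x\<in>{1..m}. \<forall>y\<in>{1..m}. \<exists>n. (\<pi> ^^ n) x = y)"

end

theory Submission
  imports Defs
begin

definition rot :: "nat \<Rightarrow> nat \<Rightarrow> nat" where
  "rot m i = (if i \<in> {1..m} then i mod m + 1 else i)"

lemma rot_pow: "i \<in> {1..m} \<Longrightarrow> (rot m ^^ n) i = (i - 1 + n) mod m + 1"
proof (induction n)
  case 0 then show ?case by auto
next
  case (Suc n)
  have "m \<ge> 1" using Suc by auto
  have "(rot m ^^ Suc n) i = rot m ((i - 1 + n) mod m + 1)" using Suc by simp
  also have "\<dots> = ((i - 1 + n) mod m + 1) mod m + 1"
    using \<open>m \<ge> 1\<close> by (simp add: rot_def Suc_le_eq)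
  also have "\<dots> = (i - 1 + Suc n) mod m + 1" by (simp add: mod_Suc_eq)
  finally show ?case .
qed

lemma rot_in: "i \<in> {1..m} \<Longrightarrow> rot m i \<in> {1..m}"
  by (auto simp: rot_def Suc_le_eq)

lemma rot_pow_in: "i \<in> {1..m} \<Longrightarrow> (rot m ^^ n) i \<in> {1..m}"
  by (simp add: rot_pow Suc_le_eq)

lemma rot_cyclic: assumes "m \<ge> 1" shows "cyclic_perm m (rot m)"
  unfolding cyclic_perm_def
proof
  have inj: "inj_on (rot m) {1..m}"
  proof (rule inj_onI)
    fix x y assume xy: "x \<in> {1..m}" "y \<in> {1..m}" "rot m x = rot m y"
    then have "x mod m = y mod m" by (simp add: rot_def)
    then show "x = y" using xy by (cases "x = m"; cases "y = m") auto
  qed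
  have img: "rot m ` {1..m} = {1..m}"
    using inj rot_in by (meson endo_inj_surj finite_atLeastAtMost image_subsetI)
  show "rot m permutes {1..m}"
    apply (rule bij_imp_permutes)
    using inj img unfolding bij_betw_def apply blast
    apply (auto simp add: rot_def)
    done
  show "\<forall>x\<in>{1..m}. \<forall>y\<in>{1..m}. \<exists>n. (rot m ^^ n) x = y"
  proof (intro ballI)
    fix x y assume x: "x \<in> {1..m}" and y: "y \<in> {1..m}"
    have "(rot m ^^ (y + m - x)) x = (x - 1 + (y + m - x)) mod m + 1" using x by (rule rot_pow)
    also have "x - 1 + (y + m - x) = (y - 1) + m" using x y by auto
    also have "((y - 1) + m) mod m + 1 = y" using y by (simp only: mod_add_self2) auto
    finally show "\<exists>n. (rot m ^^ n) x = y" by blast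
  qed
qed

lemma T_shift: "(\<Sum>i<k. (z::nat\<Rightarrow>real) ((i + j) mod m)) = (\<Sum>i<j+k. z (i mod m)) - (\<Sum>i<j. z (i mod m))"
  by (induction k) (auto simp: add.commute)

lemma T_period:
  assumes "(\<Sum>i<m. (z::nat\<Rightarrow>real) (i mod m)) = 0"
  shows "(\<Sum>i<n. z (i mod m)) = (\<Sum>i<n mod m. z (i mod m))"
proof -
  have z0: "sum z {..<m} = 0" using assms by simp
  have per: "(\<Sum>i<a + m. z (i mod m)) = (\<Sum>i<a. z (i mod m))" for a
    by (induction a) (auto simp: z0)
  have gen: "(\<Sum>i<a + m * q. z (i mod m)) = (\<Sum>i<a. z (i mod m))" for a q
  proof (induction q)
    case (Suc q)
    have "a + m * Suc q = (a + m * q) + m" by simp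
    then show ?case using per[of "a + m * q"] Suc by metis
  qed simp
  show ?thesis using gen[of "n mod m" "n div m"] by simp
qed

lemma rotsum:
  fixes z :: "nat \<Rightarrow> real"
  assumes "(\<Sum>i<m. z (i mod m)) = 0"
  shows "(\<Sum>i<k. z ((i + j) mod m)) = (\<Sum>i<(j+k) mod m. z (i mod m)) - (\<Sum>i<j mod m. z (i mod m))"
  using T_shift[of z j m k] T_period[OF assms, of "j+k"] T_period[OF assms, of j] by simp

lemma det_unique:
  fixes z :: "nat \<Rightarrow> real"
  assumes z0: "(\<Sum>i<m. z (i mod m)) = 0" and j: "j < m" "j' < m"
    and B: "\<forall>k\<in>{1..m-1}. (\<Sum>i<k. z ((i + j) mod m)) > 0"
           "\<forall>k\<in>{1..m-1}. (\<Sum>i<k. z ((i + j') mod m)) > 0"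
  shows "j = j'"
proof (rule ccontr)
  assume ne: "j \<noteq> j'"
  define T where "T n = (\<Sum>i<n. z (i mod m))" for n
  have key: "T b > T a" if ab: "a < m" "b < m" "a \<noteq> b"
     and Ba: "\<forall>k\<in>{1..m-1}. (\<Sum>i<k. z ((i + a) mod m)) > 0" for a b
  proof -
    define k where "k = (if a < b then b - a else b + m - a)"
    have k: "k \<in> {1..m-1}" using ab by (auto simp: k_def)
    have "(a + k) mod m = b" using ab by (auto simp: k_def)
    moreover have "(\<Sum>i<k. z ((i + a) mod m)) = T ((a+k) mod m) - T (a mod m)"
      unfolding T_def by (rule rotsum[OF z0])
    ultimately have "(\<Sum>i<k. z ((i + a) mod m)) = T b - T a"
      using ab by simp
    then show ?thesis using Ba k by fastforce
  qed
  have "T j' > T j" using key[of j j'] j ne B by auto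
  moreover have "T j > T j'" using key[of j' j] j ne B by auto
  ultimately show False by simp
qed

lemma det_exists:
  fixes z :: "nat \<Rightarrow> real"
  assumes m: "m \<ge> 1" and z0: "(\<Sum>i<m. z (i mod m)) = 0"
    and dist: "\<And>a b. a < b \<Longrightarrow> b < m \<Longrightarrow> (\<Sum>i<a. z (i mod m)) \<noteq> (\<Sum>i<b. z (i mod m))"
  shows "\<exists>j<m. \<forall>k\<in>{1..m-1}. (\<Sum>i<k. z ((i + j) mod m)) > 0"
proof -
  define T where "T n = (\<Sum>i<n. z (i mod m))" for n
  have "Min (T ` {..<m}) \<in> T ` {..<m}" using m by (intro Min_in) (auto simp: lessThan_empty_iff)
  then obtain j where j: "j < m" "T j = Min (T ` {..<m})" by auto
  have min: "T j \<le> T i" if "i < m" for i using j that by auto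
  have dist': "T a \<noteq> T b" if "a < m" "b < m" "a \<noteq> b" for a b
    using dist[of a b] dist[of b a] that unfolding T_def by (cases "a < b") auto
  show ?thesis
  proof (intro exI conjI ballI)
    show "j < m" by fact
    fix k assume k: "k \<in> {1..m-1}"
    have r0: "(\<Sum>i<k. z ((i + j) mod m)) = T ((j+k) mod m) - T (j mod m)"
      unfolding T_def by (rule rotsum[OF z0])
    have r: "(\<Sum>i<k. z ((i + j) mod m)) = T ((j+k) mod m) - T j"
      using r0 j by simp
    have ne: "(j + k) mod m \<noteq> j"
    proof (cases "j + k < m")
      case True then show ?thesis using k by simp
    next
      case False
      then have "(j + k) mod m = j + k - m"
        using j k by (simp add: le_mod_geq)
      then show ?thesis using k j False by auto
    qed
    have lt: "(j+k) mod m < m" using m by simp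
    have "T ((j+k) mod m) > T j"
      using min[OF lt] dist'[OF lt j(1) ne] by linarith
    then show "(\<Sum>i<k. z ((i + j) mod m)) > 0" using r by simp
  qed
qed

lemma sets_Ball_finite:
  assumes "\<And>k. k \<in> K \<Longrightarrow> {x\<in>space N. P k x} \<in> sets N" "finite K"
  shows "{x\<in>space N. \<forall>k\<in>K. P k x} \<in> sets N"
proof (cases "K = {}")
  case True then show ?thesis by simp
next
  case False then show ?thesis using assms by (intro sets.sets_Collect_finite_All') auto
qed

lemma link:
  assumes "k \<le> m"
  shows "(\<Sum>i=1..k. f ((rot m ^^ j) i)) = (\<Sum>i<k. f (Suc ((i + j) mod m)))"
proof -
  have "(\<Sum>i=1..k. f ((rot m ^^ j) i)) = (\<Sum>i<k. f ((rot m ^^ j) (Suc i)))"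
    using sum.atLeast1_atMost_eq[of "\<lambda>i. f ((rot m ^^ j) i)" k] by simp
  also have "\<dots> = (\<Sum>i<k. f (Suc ((i + j) mod m)))"
    using assms by (intro sum.cong) (auto simp: rot_pow)
  finally show ?thesis .
qed

theorem mainTheorem8:
  fixes M :: "'a measure" and \<xi> :: "nat \<Rightarrow> 'a \<Rightarrow> real" and m :: nat
  assumes "prob_space M"
    and "m \<ge> 1"
    and meas: "\<And>i. i \<in> {1..m} \<Longrightarrow> \<xi> i \<in> borel_measurable M"
    and sum_zero: "AE \<omega> in M. (\<Sum>i=1..m. \<xi> i \<omega>) = 0"
    and cyc: "\<And>\<pi>. cyclic_perm m \<pi> \<Longrightarrow>
        distr M (PiM {1..m} (\<lambda>_. borel)) (\<lambda>\<omega>. \<lambda>i\<in>{1..m}. \<xi> i \<omega>)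
      = distr M (PiM {1..m} (\<lambda>_. borel)) (\<lambda>\<omega>. \<lambda>i\<in>{1..m}. \<xi> (\<pi> i) \<omega>)"
    and no_atoms: "\<And>k x. k \<in> {1..m-1} \<Longrightarrow>
        measure M {\<omega> \<in> space M. (\<Sum>i=1..k. \<xi> i \<omega>) = x} = 0"
  shows "measure M {\<omega> \<in> space M. \<forall>k\<in>{1..m-1}. (\<Sum>i=1..k. \<xi> i \<omega>) > 0} = 1 / real m"
proof -
  interpret P: prob_space M by fact
  have m: "m \<ge> 1" by fact
  define N where "N = PiM {1..m} (\<lambda>_. borel :: real measure)"
  define \<rho> where "\<rho> = rot m"
  define X where "X j \<omega> = (\<lambda>i\<in>{1..m}. \<xi> ((\<rho> ^^ j) i) \<omega>)" for j \<omega>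
  have Xm: "X j \<in> M \<rightarrow>\<^sub>M N" for j
    unfolding X_def N_def
    by (rule measurable_restrict) (use meas rot_pow_in in \<open>auto simp: \<rho>_def\<close>)
  define g where "g y = (\<lambda>i\<in>{1..m}. y (\<rho> i))" for y :: "nat \<Rightarrow> real"
  have gm: "g \<in> N \<rightarrow>\<^sub>M N"
    unfolding g_def N_def
    by (rule measurable_restrict, rule measurable_component_singleton) (use rot_in[of _ m] in \<open>auto simp: \<rho>_def\<close>)
  have XS: "X (Suc j) = g \<circ> X j" for j
  proof
    fix \<omega>
    show "X (Suc j) \<omega> = (g \<circ> X j) \<omega>"
      unfolding X_def g_def comp_def
      by (rule ext) (use rot_in[of _ m] in \<open>auto simp: \<rho>_def funpow_swap1\<close>)
  qed
  have cyc': "distr M N (X 1) = distr M N (X 0)"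
  proof -
    have "X 0 = (\<lambda>\<omega>. \<lambda>i\<in>{1..m}. \<xi> i \<omega>)" unfolding X_def by simp
    moreover have "X 1 = (\<lambda>\<omega>. \<lambda>i\<in>{1..m}. \<xi> (rot m i) \<omega>)" unfolding X_def \<rho>_def by simp
    ultimately show ?thesis using cyc[OF rot_cyclic[OF m]] unfolding N_def by simp
  qed
  have inv: "distr M N (X j) = distr M N (X 0)" for j
  proof (induction j)
    case 0 then show ?case by simp
  next
    case (Suc j)
    have "distr M N (X (Suc j)) = distr (distr M N (X j)) N g"
      unfolding XS by (rule distr_distr[OF gm Xm, symmetric])
    also have "\<dots> = distr (distr M N (X 0)) N g" using Suc by simp
    also have "\<dots> = distr M N (X 1)"
      using XS[of 0] distr_distr[OF gm Xm[of 0]] by simp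
    also have "\<dots> = distr M N (X 0)" by (rule cyc')
    finally show ?case .
  qed
  have meq: "P.prob (X j -` E \<inter> space M) = P.prob (X 0 -` E \<inter> space M)" if "E \<in> sets N" for E j
    using measure_distr[OF Xm[of j] that] measure_distr[OF Xm[of 0] that] inv[of j] by simp
  have Xsp: "X j \<omega> \<in> space N" if "\<omega> \<in> space M" for j \<omega>
    using Xm[of j] that by (rule measurable_space)
  have psN: "(\<lambda>y. \<Sum>i=1..k. y i) \<in> borel_measurable N" if "k \<le> m" for k
    unfolding N_def using that
    by (intro borel_measurable_sum measurable_component_singleton) auto
  define z where "z \<omega> i = \<xi> (Suc i) \<omega>" for \<omega> i
  have Xsum: "(\<Sum>i=1..k. X j \<omega> i) = (\<Sum>i<k. z \<omega> ((i + j) mod m))" if "k \<le> m" for k j \<omega>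
  proof -
    have "(\<Sum>i=1..k. X j \<omega> i) = (\<Sum>i=1..k. \<xi> ((rot m ^^ j) i) \<omega>)"
      using that by (intro sum.cong) (auto simp: X_def \<rho>_def)
    also have "\<dots> = (\<Sum>i<k. z \<omega> ((i + j) mod m))"
      using link[OF that, of "\<lambda>i. \<xi> i \<omega>" j] by (simp add: z_def)
    finally show ?thesis .
  qed
  define Epos where "Epos = {y\<in>space N. \<forall>k\<in>{1..m-1}. (\<Sum>i=1..k. y i) > 0}"
  have Epos: "Epos \<in> sets N"
    unfolding Epos_def
  proof (rule sets_Ball_finite)
    fix k assume "k \<in> {1..m-1}"
    then have "(\<lambda>y. \<Sum>i=1..k. y i) \<in> borel_measurable N" by (intro psN) auto
    then show "{y \<in> space N. 0 < (\<Sum>i=1..k. y i)} \<in> sets N"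
      by (intro borel_measurable_less) auto
  qed simp
  define Z where "Z k = {y\<in>space N. (\<Sum>i=1..k. y i) = 0}" for k
  have Zs: "Z k \<in> sets N" if "k \<le> m" for k
    unfolding Z_def using that by (intro borel_measurable_eq psN) auto
  define A where "A j = X j -` Epos \<inter> space M" for j
  have A_iff: "\<omega> \<in> A j \<longleftrightarrow> \<omega> \<in> space M \<and> (\<forall>k\<in>{1..m-1}. (\<Sum>i<k. z \<omega> ((i + j) mod m)) > 0)" for \<omega> j
  proof -
    have "\<forall>k\<in>{1..m-1}. (\<Sum>i=1..k. X j \<omega> i) = (\<Sum>i<k. z \<omega> ((i+j) mod m))" using Xsum by auto
    then show ?thesis unfolding A_def Epos_def using Xsp by auto
  qed
  have A_sets: "A j \<in> sets M" for j
    unfolding A_def using Xm Epos by (rule measurable_sets)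
  have Z_iff: "\<omega> \<in> X a -` Z k \<inter> space M \<longleftrightarrow> \<omega> \<in> space M \<and> (\<Sum>i<k. z \<omega> ((i + a) mod m)) = 0"
    if "k \<le> m" for \<omega> a k
    unfolding Z_def using Xsp Xsum[OF that] by auto
  have Znull: "P.prob (X a -` Z k \<inter> space M) = 0" if "k \<in> {1..m-1}" for a k
  proof -
    have km: "k \<le> m" using that by auto
    have "P.prob (X a -` Z k \<inter> space M) = P.prob (X 0 -` Z k \<inter> space M)"
      by (rule meq[OF Zs[OF km]])
    also have "X 0 -` Z k \<inter> space M = {\<omega> \<in> space M. (\<Sum>i=1..k. \<xi> i \<omega>) = 0}"
      unfolding Z_def using Xsp[of _ 0] km by (auto simp: X_def)
    also have "P.prob \<dots> = 0" using no_atoms[OF that] .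
    finally show ?thesis .
  qed
  define Bad where "Bad = (\<Union>a\<in>{..<m}. \<Union>b\<in>{a<..<m}. X a -` Z (b - a) \<inter> space M)"
  define G where "G = {\<omega>\<in>space M. (\<Sum>i=1..m. \<xi> i \<omega>) = 0} - Bad"
  have Bad_sets: "Bad \<in> sets M"
    unfolding Bad_def
    by (intro sets.finite_UN finite_lessThan finite_greaterThanLessThan measurable_sets[OF Xm] Zs) auto
  have G_sets: "G \<in> sets M"
    unfolding G_def using Bad_sets
    by (intro sets.Diff borel_measurable_eq borel_measurable_sum borel_measurable_const) (auto intro: meas)
  have AE_notBad: "AE \<omega> in M. \<omega> \<notin> Bad"
  proof -
    have "AE \<omega> in M. \<forall>a\<in>{..<m}. \<forall>b\<in>{a<..<m}. \<omega> \<notin> X a -` Z (b - a) \<inter> space M"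
    proof (intro AE_finite_allI finite_lessThan finite_greaterThanLessThan)
      fix a b assume ab: "a \<in> {..<m}" "b \<in> {a<..<m}"
      have k: "b - a \<in> {1..m-1}" using ab by auto
      have "X a -` Z (b - a) \<inter> space M \<in> null_sets M"
        using Znull[OF k, of a] measurable_sets[OF Xm Zs[of "b - a"]] k
        by (auto simp: P.emeasure_eq_measure null_sets_def)
      then show "AE \<omega> in M. \<omega> \<notin> X a -` Z (b - a) \<inter> space M" by (rule AE_not_in)
    qed
    then show ?thesis unfolding Bad_def by auto
  qed
  have AE_G: "AE \<omega> in M. \<omega> \<in> G"
    using AE_notBad sum_zero unfolding G_def by auto
  have G_prob: "P.prob G = 1"
    using P.finite_measure_eq_AE[of G "space M"] AE_G G_sets P.prob_space by auto
  have Gz: "(\<Sum>i<m. z \<omega> (i mod m)) = 0" if "\<omega> \<in> G" for \<omega>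
  proof -
    have "(\<Sum>i<m. z \<omega> (i mod m)) = (\<Sum>i=1..m. \<xi> i \<omega>)"
      using sum.atLeast1_atMost_eq[of "\<lambda>i. \<xi> i \<omega>" m] by (simp add: z_def)
    then show ?thesis using that unfolding G_def by simp
  qed
  have Gdist: "(\<Sum>i<a. z \<omega> (i mod m)) \<noteq> (\<Sum>i<b. z \<omega> (i mod m))"
    if "\<omega> \<in> G" "a < b" "b < m" for \<omega> a b
  proof
    assume eq: "(\<Sum>i<a. z \<omega> (i mod m)) = (\<Sum>i<b. z \<omega> (i mod m))"
    have "(\<Sum>i<b - a. z \<omega> ((i + a) mod m)) = 0"
      using T_shift[where z="z \<omega>" and k="b - a" and j=a and m=m] eq that by simp
    then have "\<omega> \<in> X a -` Z (b - a) \<inter> space M"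
      using Z_iff[of "b - a" \<omega> a] that G_def by auto
    then have "\<omega> \<in> Bad" unfolding Bad_def using that
      by (intro UN_I[of a] UN_I[of b]) auto
    then show False using that unfolding G_def by auto
  qed
  have disj: "disjoint_family_on (\<lambda>j. A j \<inter> G) {..<m}"
    unfolding disjoint_family_on_def
  proof (intro ballI impI)
    fix j j' assume j: "j \<in> {..<m}" "j' \<in> {..<m}" "j \<noteq> j'"
    show "A j \<inter> G \<inter> (A j' \<inter> G) = {}"
    proof (rule ccontr)
      assume "A j \<inter> G \<inter> (A j' \<inter> G) \<noteq> {}"
      then obtain \<omega> where w: "\<omega> \<in> A j" "\<omega> \<in> A j'" "\<omega> \<in> G" by blast
      have "j = j'"
        using det_unique[OF Gz[OF w(3)], of j j'] j w(1,2) A_iff by auto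
      then show False using j by simp
    qed
  qed
  have UG: "(\<Union>j\<in>{..<m}. A j \<inter> G) = G"
  proof
    show "G \<subseteq> (\<Union>j\<in>{..<m}. A j \<inter> G)"
    proof
      fix \<omega> assume w: "\<omega> \<in> G"
      obtain j where "j < m" "\<forall>k\<in>{1..m-1}. (\<Sum>i<k. z \<omega> ((i + j) mod m)) > 0"
        using det_exists[OF m Gz[OF w] Gdist[OF w]] by blast
      then show "\<omega> \<in> (\<Union>j\<in>{..<m}. A j \<inter> G)"
        using w A_iff G_def by auto
    qed
  qed auto
  have Aeq: "P.prob (A j) = P.prob (A 0)" for j
    unfolding A_def by (rule meq[OF Epos])
  have AG: "P.prob (A j) = P.prob (A j \<inter> G)" for j
    using AE_G A_sets G_sets by (intro P.finite_measure_eq_AE) auto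
  have "1 = P.prob (\<Union>j\<in>{..<m}. A j \<inter> G)" using UG G_prob by simp
  also have "\<dots> = (\<Sum>j<m. P.prob (A j \<inter> G))"
    using A_sets G_sets disj by (intro P.finite_measure_finite_Union) auto
  also have "\<dots> = (\<Sum>j<m. P.prob (A 0))" using AG Aeq by (intro sum.cong) auto
  also have "\<dots> = real m * P.prob (A 0)" by simp
  finally have "P.prob (A 0) = 1 / real m" using m by (simp add: field_simps)
  moreover have "A 0 = {\<omega> \<in> space M. \<forall>k\<in>{1..m-1}. (\<Sum>i=1..k. \<xi> i \<omega>) > 0}"
  proof -
    have "(\<Sum>i<k. z \<omega> ((i + 0) mod m)) = (\<Sum>i=1..k. \<xi> i \<omega>)" if "k \<in> {1..m-1}" for k \<omega>
    proof -
      have "(\<Sum>i<k. z \<omega> ((i + 0) mod m)) = (\<Sum>i<k. z \<omega> i)"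
        using that by (intro sum.cong) auto
      then show ?thesis using sum.atLeast1_atMost_eq[of "\<lambda>i. \<xi> i \<omega>" k] by (simp add: z_def)
    qed
    then show ?thesis using A_iff by auto
  qed
  ultimately show ?thesis by simp
qed

end
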